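(* Consider a Fisher market with $n$ buyers and $m$ items, each item having supply $1$, in which every buyer values every item at $v_{ij}=1$. Buyer $i$ has a hard demand $d_i\ge 0$ and budget $B_i$. Assume there exists an allocation $x\ge 0$ with $\sum_i x_{ij}\le 1$ for all $j$ and $\sum_j x_{ij}-d_i>0$ for all $i$. Let $x$ be an optimal solution of $$\max_{x\ge 0}\sum_i B_i\log\Big(\sum_j x_{ij}-d_i\Big)\quad\text{s.t.}\quad \sum_i x_{ij}\le 1\ \ \forall j.$$ (i) If $B_i=1$ for all buyers $i$, then the difference $\sum_j x_{ij}-d_i$ is the same for all buyers $i$. (ii) If $B_i=d_i>0$ for all buyers $i$, then the ratio $\frac{\sum_j x_{ij}}{d_i}$ is the same for all buyers $i$. *)

theory Defs
  imports Complex_Main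
begin

text \<open>Fisher market with n buyers (indices i < n) and m items (indices j < m),
  unit supplies, all valuations v_ij = 1. An allocation is x :: nat => nat => real,
  x i j = amount of item j given to buyer i.\<close>

definition feasible_alloc :: "nat \<Rightarrow> nat \<Rightarrow> (nat \<Rightarrow> nat \<Rightarrow> real) \<Rightarrow> bool" where
  "feasible_alloc n m x \<longleftrightarrow>
     (\<forall>i<n. \<forall>j<m. x i j \<ge> 0) \<and> (\<forall>j<m. (\<Sum>i<n. x i j) \<le> 1)"

definition surplus :: "nat \<Rightarrow> (nat \<Rightarrow> nat \<Rightarrow> real) \<Rightarrow> (nat \<Rightarrow> real) \<Rightarrow> nat \<Rightarrow> real" where
  "surplus m x d i = (\<Sum>j<m. x i j) - d i"

text \<open>Effective domain of the objective: feasible and all logs defined (arguments > 0).\<close>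
definition objective_domain :: "nat \<Rightarrow> nat \<Rightarrow> (nat \<Rightarrow> real) \<Rightarrow> (nat \<Rightarrow> nat \<Rightarrow> real) \<Rightarrow> bool" where
  "objective_domain n m d x \<longleftrightarrow> feasible_alloc n m x \<and> (\<forall>i<n. surplus m x d i > 0)"

definition objective :: "nat \<Rightarrow> nat \<Rightarrow> (nat \<Rightarrow> real) \<Rightarrow> (nat \<Rightarrow> real) \<Rightarrow> (nat \<Rightarrow> nat \<Rightarrow> real) \<Rightarrow> real" where
  "objective n m B d x = (\<Sum>i<n. B i * ln (surplus m x d i))"

definition optimal_alloc :: "nat \<Rightarrow> nat \<Rightarrow> (nat \<Rightarrow> real) \<Rightarrow> (nat \<Rightarrow> real) \<Rightarrow> (nat \<Rightarrow> nat \<Rightarrow> real) \<Rightarrow> bool" where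
  "optimal_alloc n m B d x \<longleftrightarrow> objective_domain n m d x \<and>
     (\<forall>y. objective_domain n m d y \<longrightarrow> objective n m B d y \<le> objective n m B d x)"

end

theory Submission
  imports Defs
begin

lemma key:
  fixes n m :: nat and B d :: "nat \<Rightarrow> real" and x :: "nat \<Rightarrow> nat \<Rightarrow> real"
  assumes d_nonneg: "\<forall>i<n. d i \<ge> 0"
    and opt: "optimal_alloc n m B d x"
    and ik: "i < n" "k < n" "i \<noteq> k"
  shows "B i / surplus m x d i \<le> B k / surplus m x d k"
proof (rule ccontr)
  assume neg: "\<not> ?thesis"
  define ui where "ui = surplus m x d i"
  define uk where "uk = surplus m x d k"
  define sk where "sk = (\<Sum>j<m. x k j)"
  have dom: "objective_domain n m d x" using opt by (simp add: optimal_alloc_def)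
  have ui: "ui > 0" using dom ik by (simp add: objective_domain_def ui_def)
  have uk: "uk > 0" using dom ik by (simp add: objective_domain_def uk_def)
  have skpos: "sk > 0" proof -
    have "d k \<ge> 0" using d_nonneg ik by simp
    thus ?thesis using uk by (simp add: uk_def sk_def surplus_def)
  qed
  have xnn: "\<forall>a<n. \<forall>j<m. x a j \<ge> 0" and col: "\<forall>j<m. (\<Sum>a<n. x a j) \<le> 1"
    using dom by (auto simp: objective_domain_def feasible_alloc_def)
  define y where "y t = (\<lambda>a j. x a j + (if a = i then t * x k j else 0) - (if a = k then t * x k j else 0))" for t :: real
  define phi where "phi t = B i * ln (ui + t * sk) + B k * ln (uk - t * sk)" for t
  have sy: "surplus m (y t) d a = surplus m x d a + (if a = i then t * sk else 0) - (if a = k then t * sk else 0)" for t a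
    using ik by (auto simp: surplus_def y_def sum.distrib sum_subtractf sum_distrib_left sk_def)
  have obj: "objective n m B d (y t) = objective n m B d x - phi 0 + phi t" for t
  proof -
    have "B a * ln (surplus m (y t) d a) = B a * ln (surplus m x d a)
       + (if a = i then B i * ln (ui + t * sk) - B i * ln ui else 0)
       + (if a = k then B k * ln (uk - t * sk) - B k * ln uk else 0)" for a
      using ik by (auto simp: sy ui_def uk_def)
    hence "objective n m B d (y t) = objective n m B d x
       + (B i * ln (ui + t * sk) - B i * ln ui) + (B k * ln (uk - t * sk) - B k * ln uk)"
      unfolding objective_def using ik by (simp add: sum.distrib)
    thus ?thesis by (simp add: phi_def)
  qed
  have feas: "objective_domain n m d (y t)" if t: "0 \<le> t" "t \<le> 1" "t * sk < uk" for t
  proof -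
    have nn: "\<forall>a<n. \<forall>j<m. y t a j \<ge> 0"
    proof (intro allI impI)
      fix a j assume a: "a < n" "j < m"
      have "x k j \<ge> 0" "x a j \<ge> 0" using xnn a ik by auto
      hence "t * x k j \<le> x k j" "0 \<le> t * x k j" using t by (auto simp: mult_left_le_one_le)
      thus "y t a j \<ge> 0" using \<open>x a j \<ge> 0\<close> by (auto simp: y_def)
    qed
    have cs: "(\<Sum>a<n. y t a j) = (\<Sum>a<n. x a j)" for j
      using ik by (simp add: y_def sum.distrib sum_subtractf)
    have sp: "\<forall>a<n. surplus m (y t) d a > 0"
    proof (intro allI impI)
      fix a assume a: "a < n"
      have "surplus m x d a > 0" using dom a by (simp add: objective_domain_def)
      moreover have "t * sk \<ge> 0" using t skpos by simp
      ultimately show "surplus m (y t) d a > 0" using t ik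
        by (auto simp: sy uk_def)
    qed
    show ?thesis using nn cs col sp by (simp add: objective_domain_def feasible_alloc_def)
  qed
  define D where "D = B i * sk / ui - B k * sk / uk"
  have Dpos: "D > 0"
  proof -
    have "B i / ui > B k / uk" using neg by (simp add: ui_def uk_def)
    hence "B i / ui * sk > B k / uk * sk" using skpos by (rule mult_strict_right_mono)
    moreover have "B i * sk / ui = B i / ui * sk" "B k * sk / uk = B k / uk * sk" by simp_all
    ultimately show ?thesis unfolding D_def by linarith
  qed
  have der: "DERIV phi 0 :> D"
    unfolding phi_def D_def
    by (rule derivative_eq_intros refl | use ui uk in \<open>simp add: field_simps\<close>)+
  obtain e where e: "e > 0" "\<forall>h>0. h < e \<longrightarrow> phi 0 < phi (0 + h)"
    using DERIV_pos_inc_right[OF der Dpos] by blast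
  define h where "h = min e (min 1 (uk / sk)) / 2"
  have h: "h > 0" "h < e" "h \<le> 1" "h * sk < uk"
  proof -
    have "uk / sk > 0" using uk skpos by simp
    thus "h > 0" "h < e" "h \<le> 1" using e by (auto simp: h_def)
    have "min e (min 1 (uk / sk)) \<le> uk / sk" by simp
    moreover have "min e (min 1 (uk / sk)) > 0" using \<open>uk / sk > 0\<close> e by simp
    moreover have "\<And>a b :: real. a \<le> b \<Longrightarrow> 0 < a \<Longrightarrow> a / 2 < b" by linarith
    ultimately have "h < uk / sk" unfolding h_def by blast
    thus "h * sk < uk" using skpos by (simp add: pos_less_divide_eq)
  qed
  have "phi 0 < phi h" using e h by auto
  hence "objective n m B d x < objective n m B d (y h)" by (simp add: obj)
  moreover have "objective n m B d (y h) \<le> objective n m B d x"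
    using opt feas[of h] h by (simp add: optimal_alloc_def)
  ultimately show False by simp
qed

theorem proposition1:
  fixes n m :: nat and B d :: "nat \<Rightarrow> real" and x :: "nat \<Rightarrow> nat \<Rightarrow> real"
  assumes d_nonneg: "\<forall>i<n. d i \<ge> 0"
    and strictly_feasible: "\<exists>y. feasible_alloc n m y \<and> (\<forall>i<n. surplus m y d i > 0)"
    and opt: "optimal_alloc n m B d x"
  shows "((\<forall>i<n. B i = 1) \<longrightarrow> (\<forall>i<n. \<forall>k<n. surplus m x d i = surplus m x d k))
       \<and> ((\<forall>i<n. B i = d i \<and> d i > 0) \<longrightarrow>
            (\<forall>i<n. \<forall>k<n. (\<Sum>j<m. x i j) / d i = (\<Sum>j<m. x k j) / d k))"
proof -
  have pos: "surplus m x d a > 0" if "a < n" for a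
    using opt that by (simp add: optimal_alloc_def objective_domain_def)
  have eq: "B i / surplus m x d i = B k / surplus m x d k" if "i < n" "k < n" for i k
  proof (cases "i = k")
    case False
    show ?thesis using key[OF d_nonneg opt that False] key[OF d_nonneg opt that(2,1)] False by auto
  qed simp
  show ?thesis
  proof (intro conjI impI allI)
    fix i k assume B: "\<forall>i<n. B i = 1" and ik: "i < n" "k < n"
    show "surplus m x d i = surplus m x d k"
      using eq[OF ik] B ik pos[OF ik(1)] pos[OF ik(2)] by (simp add: field_simps)
  next
    fix i k assume B: "\<forall>i<n. B i = d i \<and> d i > 0" and ik: "i < n" "k < n"
    have di: "d i > 0" "d k > 0" "B i = d i" "B k = d k" using B ik by auto
    have "d i / surplus m x d i = d k / surplus m x d k" using eq[OF ik] di by simp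
    hence "surplus m x d i / d i = surplus m x d k / d k"
      using di pos[OF ik(1)] pos[OF ik(2)] by (simp add: field_simps)
    thus "(\<Sum>j<m. x i j) / d i = (\<Sum>j<m. x k j) / d k"
      using di by (simp add: surplus_def diff_divide_distrib)
  qed
qed

end
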